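(* Let $\psi\in[0,2\pi)$ and consider, for $\kappa\in\mathbb{R}$, the equation $$\cos(\kappa\cos\psi)+\cos\!\Big(\tfrac{\kappa}{2}\cos\psi+\tfrac{\sqrt3\kappa}{2}\sin\psi\Big)+\cos\!\Big(\tfrac{\kappa}{2}\cos\psi-\tfrac{\sqrt3\kappa}{2}\sin\psi\Big)-3=0. \qquad (\ast\ast)$$ Then $(\ast\ast)$ has a real solution $\kappa\neq0$ if and only if $(\sqrt3\tan\psi-1)/2\in\mathbb{Q}_\infty$. In that case one can write $$\cos\psi=\frac{\sqrt3}{2}\frac{m_1}{\sqrt{m_1^2+m_1m_2+m_2^2}},\qquad \sin\psi=\frac12\frac{m_1+2m_2}{\sqrt{m_1^2+m_1m_2+m_2^2}}$$ with $(m_1,m_2)\in\mathbb{Z}^2\setminus\{(0,0)\}$, $\gcd(|m_1|,|m_2|)=1$, and the set of real solutions of $(\ast\ast)$ is exactly $$\Big\{\tfrac{4M\pi}{\sqrt3}\sqrt{m_1^2+m_1m_2+m_2^2} : M\in\mathbb{Z}\Big\}.$$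
   Context: $\mathbb{Q}_\infty := \mathbb{Q}\cup\{\pm\infty\}$, with the conventions $\tan(\pm\pi/2)=\pm\infty$ and $(\sqrt3\cdot(\pm\infty)-1)/2=\pm\infty$. *)

theory Defs
  imports Complex_Main
begin

definition eqnF :: "real \<Rightarrow> real \<Rightarrow> real" where
  "eqnF \<psi> \<kappa> =
     cos (\<kappa> * cos \<psi>)
   + cos (\<kappa> / 2 * cos \<psi> + sqrt 3 * \<kappa> / 2 * sin \<psi>)
   + cos (\<kappa> / 2 * cos \<psi> - sqrt 3 * \<kappa> / 2 * sin \<psi>) - 3"

text \<open>The condition (sqrt 3 tan psi - 1)/2 in Q_infty = Q with plus/minus infinity, with the
  conventions tan(+-pi/2) = +-infinity and (sqrt 3 (+-infinity) - 1)/2 = +-infinity.\<close>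
definition in_Q_infty_cond :: "real \<Rightarrow> bool" where
  "in_Q_infty_cond \<psi> \<longleftrightarrow> cos \<psi> = 0 \<or> (sqrt 3 * tan \<psi> - 1) / 2 \<in> \<rat>"

end

theory Submission
  imports Defs
begin

lemma eqnF_zero_iff:
  "eqnF \<psi> \<kappa> = 0 \<longleftrightarrow> (\<exists>(p::int) (q::int). \<kappa> * cos \<psi> = 2*pi*p \<and>
      \<kappa> / 2 * cos \<psi> + sqrt 3 * \<kappa> / 2 * sin \<psi> = 2*pi*q)"
proof -
  define a where "a = \<kappa> * cos \<psi>"
  define b where "b = \<kappa> / 2 * cos \<psi> + sqrt 3 * \<kappa> / 2 * sin \<psi>"
  have c3: "\<kappa> / 2 * cos \<psi> - sqrt 3 * \<kappa> / 2 * sin \<psi> = a - b"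
    unfolding a_def b_def by (simp add: algebra_simps)
  have E: "eqnF \<psi> \<kappa> = cos a + cos b + cos (a - b) - 3"
    unfolding eqnF_def c3 by (simp add: a_def b_def)
  show ?thesis unfolding E a_def[symmetric] b_def[symmetric]
  proof
    assume "cos a + cos b + cos (a - b) - 3 = 0"
    moreover have "cos a \<le> 1" "cos b \<le> 1" "cos (a-b) \<le> 1" by auto
    ultimately have "cos a = 1" "cos b = 1" by linarith+
    then obtain p q :: int where "a = p*2*pi" "b = q*2*pi" by (auto simp: cos_one_2pi_int)
    then show "\<exists>(p::int) (q::int). a = 2*pi*p \<and> b = 2*pi*q" by (intro exI[of _ p] exI[of _ q]) simp
  next
    assume "\<exists>(p::int) (q::int). a = 2*pi*p \<and> b = 2*pi*q"
    then obtain p q :: int where pq: "a = 2*pi*p" "b = 2*pi*q" by blast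
    have "cos a = 1" using pq by (auto simp: cos_one_2pi_int intro!: exI[of _ p])
    moreover have "cos b = 1" using pq by (auto simp: cos_one_2pi_int intro!: exI[of _ q])
    moreover have "cos (a - b) = 1" using pq
      by (auto simp: cos_one_2pi_int algebra_simps intro!: exI[of _ "p - q"])
    ultimately show "cos a + cos b + cos (a - b) - 3 = 0" by simp
  qed
qed

lemma N_pos:
  fixes m1 m2 :: int
  assumes "(m1, m2) \<noteq> (0, 0)"
  shows "m1^2 + m1*m2 + m2^2 > 0"
proof -
  have "4*(m1^2 + m1*m2 + m2^2) = (2*m1+m2)^2 + 3*m2^2" by (simp add: power2_eq_square algebra_simps)
  moreover have "(2*m1+m2)^2 + 3*m2^2 > 0"
  proof (cases "m2 = 0")
    case True then have "m1 \<noteq> 0" using assms by auto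
    then show ?thesis using True by simp
  next
    case False then show ?thesis by (simp add: add_nonneg_pos)
  qed
  ultimately have "4*(m1^2 + m1*m2 + m2^2) > 0" by simp
  then show ?thesis by simp
qed

lemma set_char:
  fixes m1 m2 :: int
  assumes g: "gcd m1 m2 = 1" and N: "N = real_of_int (m1^2 + m1*m2 + m2^2)" and Np: "N > 0"
    and c: "cos \<psi> = sqrt 3 / 2 * of_int m1 / sqrt N"
    and s: "sin \<psi> = 1 / 2 * of_int (m1 + 2*m2) / sqrt N"
  shows "{\<kappa>::real. eqnF \<psi> \<kappa> = 0} = {4 * of_int M * pi / sqrt 3 * sqrt N | M :: int. True}"
proof -
  have sN: "sqrt N > 0" using Np by simp
  have s3: "sqrt 3 * sqrt 3 = (3::real)" by simp
  have s3p: "sqrt 3 > (0::real)" by simp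
  have e1: "\<kappa> * cos \<psi> = 2*pi*(\<kappa> * sqrt 3 / (4*pi*sqrt N) * m1)" for \<kappa>
    using sN pi_gt_zero unfolding c by (simp add: field_simps)
  have e2: "\<kappa> / 2 * cos \<psi> + sqrt 3 * \<kappa> / 2 * sin \<psi> = 2*pi*(\<kappa> * sqrt 3 / (4*pi*sqrt N) * (m1+m2))" for \<kappa>
  proof -
    have "\<kappa> / 2 * cos \<psi> + sqrt 3 * \<kappa> / 2 * sin \<psi>
        = \<kappa> * (sqrt 3 * m1 + sqrt 3 * (m1 + 2*m2)) / (4 * sqrt N)"
      unfolding c s using sN by (simp add: field_simps)
    also have "\<dots> = 2*pi*(\<kappa> * sqrt 3 / (4*pi*sqrt N) * (m1+m2))"
      using sN pi_gt_zero by (simp add: field_simps)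
    finally show ?thesis .
  qed
  have kt: "\<kappa> = 4 * (\<kappa> * sqrt 3 / (4*pi*sqrt N)) * pi / sqrt 3 * sqrt N" for \<kappa>
    using sN pi_gt_zero s3p by (simp add: field_simps)
  show ?thesis
  proof (intro set_eqI iffI)
    fix \<kappa> assume "\<kappa> \<in> {\<kappa>::real. eqnF \<psi> \<kappa> = 0}"
    then obtain p q :: int where pq: "\<kappa> * cos \<psi> = 2*pi*p"
       "\<kappa> / 2 * cos \<psi> + sqrt 3 * \<kappa> / 2 * sin \<psi> = 2*pi*q"
      by (auto simp: eqnF_zero_iff)
    define t where "t = \<kappa> * sqrt 3 / (4*pi*sqrt N)"
    have "2*pi*(t * m1) = 2*pi*p" using pq(1) e1[of \<kappa>] unfolding t_def by simp
    then have tp: "t * m1 = p" using pi_gt_zero by simp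
    have "2*pi*(t * (m1 + m2)) = 2*pi*q" using pq(2) e2[of \<kappa>] unfolding t_def by simp
    then have tq: "t * (m1 + m2) = q" using pi_gt_zero by simp
    obtain u v where uv: "u * m1 + v * m2 = 1" using bezout_int[of m1 m2] g by auto
    have "t = t * of_int (u * m1 + v * m2)" using uv by simp
    also have "\<dots> = of_int u * (t * m1) + of_int v * (t * (m1 + m2) - t * m1)"
      by (simp add: algebra_simps)
    also have "\<dots> = of_int (u * p + v * (q - p))" using tp tq by simp
    finally have "t = of_int (u * p + v * (q - p))" .
    then show "\<kappa> \<in> {4 * of_int M * pi / sqrt 3 * sqrt N | M :: int. True}"
      using kt[of \<kappa>] unfolding t_def[symmetric]
      by (intro CollectI exI[of _ "u * p + v * (q - p)"]) simp
  next
    fix \<kappa> assume "\<kappa> \<in> {4 * of_int M * pi / sqrt 3 * sqrt N | M :: int. True}"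
    then obtain M :: int where k: "\<kappa> = 4 * of_int M * pi / sqrt 3 * sqrt N" by auto
    have t: "\<kappa> * sqrt 3 / (4*pi*sqrt N) = M"
      unfolding k using sN pi_gt_zero s3p by (simp add: field_simps)
    show "\<kappa> \<in> {\<kappa>::real. eqnF \<psi> \<kappa> = 0}"
    proof -
      have h1: "\<kappa> * cos \<psi> = 2*pi*of_int (M*m1)" using e1[of \<kappa>] unfolding t by simp
      have h2: "\<kappa> / 2 * cos \<psi> + sqrt 3 * \<kappa> / 2 * sin \<psi> = 2*pi*of_int (M*(m1+m2))"
        using e2[of \<kappa>] unfolding t by simp
      show ?thesis unfolding mem_Collect_eq eqnF_zero_iff using h1 h2 by blast
    qed
  qed
qed

lemma rep:
  assumes "in_Q_infty_cond \<psi>"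
  shows "\<exists>m1 m2 :: int. (m1, m2) \<noteq> (0, 0) \<and> gcd m1 m2 = 1
           \<and> cos \<psi> = sqrt 3 / 2 * of_int m1 / sqrt (of_int (m1^2 + m1*m2 + m2^2))
           \<and> sin \<psi> = 1 / 2 * of_int (m1 + 2*m2) / sqrt (of_int (m1^2 + m1*m2 + m2^2))"
proof (cases "cos \<psi> = 0")
  case True
  have "sin \<psi> ^ 2 = 1" using sin_cos_squared_add[of \<psi>] True by simp
  then have "sin \<psi> = 1 \<or> sin \<psi> = -1" by (simp add: power2_eq_1_iff)
  then show ?thesis
  proof
    assume "sin \<psi> = 1" then show ?thesis using True
      by (intro exI[of _ 0] exI[of _ 1]) simp
  next
    assume "sin \<psi> = -1" then show ?thesis using True
      by (intro exI[of _ 0] exI[of _ "-1"]) simp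
  qed
next
  case False
  define c where "c = cos \<psi>"
  define s where "s = sin \<psi>"
  have cs: "c^2 + s^2 = 1" unfolding c_def s_def by simp
  have c0: "c \<noteq> 0" using False c_def by simp
  from assms False obtain x where x: "(sqrt 3 * tan \<psi> - 1) / 2 = of_rat x"
    unfolding in_Q_infty_cond_def by (auto elim: Rats_cases)
  obtain a b where ab: "quotient_of x = (a, b)" by (cases "quotient_of x") auto
  have bpos: "b > 0" using quotient_of_denom_pos[OF ab] .
  have cop: "coprime a b" using quotient_of_coprime[OF ab] .
  have xab: "(of_rat x :: real) = of_int a / of_int b"
    using quotient_of_div[OF ab] by (simp add: of_rat_divide)
  define \<sigma> :: int where "\<sigma> = (if c > 0 then 1 else -1)"
  define m1 where "m1 = \<sigma> * b"
  define m2 where "m2 = \<sigma> * a"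
  have \<sigma>sq: "\<sigma> * \<sigma> = 1" unfolding \<sigma>_def by simp
  have m1nz: "m1 \<noteq> 0" unfolding m1_def \<sigma>_def using bpos by simp
  have g: "gcd m1 m2 = 1"
  proof -
    have "gcd m1 m2 = gcd b a" unfolding m1_def m2_def \<sigma>_def by simp
    also have "\<dots> = 1" using cop by (simp add: coprime_commute coprime_iff_gcd_eq_1)
    finally show ?thesis .
  qed
  have r: "real_of_int m2 / real_of_int m1 = of_int a / of_int b"
    unfolding m1_def m2_def using \<sigma>sq bpos unfolding \<sigma>_def by auto
  have rel0: "(sqrt 3 * (s / c) - 1) / 2 = real_of_int m2 / real_of_int m1"
    using x xab r unfolding c_def s_def tan_def by simp
  have rel: "sqrt 3 * s * m1 = c * (m1 + 2 * m2)"
    using rel0 c0 m1nz by (simp add: field_simps)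
  define N where "N = real_of_int (m1^2 + m1*m2 + m2^2)"
  have Np: "N > 0" unfolding N_def using m1nz by (intro of_int_pos N_pos) simp
  have sN: "sqrt N > 0" using Np by simp
  have "c^2 * (4 * N) = 3 * m1^2"
  proof -
    have "3 * m1^2 = 3 * m1^2 * (c^2 + s^2)" using cs by simp
    also have "\<dots> = 3 * m1^2 * c^2 + (sqrt 3 * s * m1)^2"
      by (simp add: power_mult_distrib algebra_simps)
    also have "\<dots> = 3 * m1^2 * c^2 + (c * (m1 + 2 * m2))^2" using rel by simp
    also have "\<dots> = c^2 * (4 * N)" unfolding N_def by (simp add: power2_eq_square algebra_simps)
    finally show ?thesis by simp
  qed
  define d where "d = sqrt 3 / 2 * of_int m1 / sqrt N"
  have dsq: "d^2 = c^2"
  proof -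
    have "d^2 = 3 * m1^2 / (4 * N)" unfolding d_def using Np
      by (simp add: power_divide power_mult_distrib)
    also have "\<dots> = c^2" using \<open>c^2 * (4 * N) = 3 * m1^2\<close> Np by (simp add: field_simps)
    finally show ?thesis .
  qed
  have sign: "(d > 0) = (c > 0)"
  proof -
    have "(d > 0) = (m1 > 0)" unfolding d_def using sN by (simp add: zero_less_mult_iff zero_less_divide_iff)
    also have "\<dots> = (c > 0)" unfolding m1_def \<sigma>_def using bpos by auto
    finally show ?thesis .
  qed
  have cd: "c = d"
  proof -
    have "sqrt (c^2) = sqrt (d^2)" using dsq by simp
    then have "\<bar>c\<bar> = \<bar>d\<bar>" by simp
    then show ?thesis using sign c0 by (cases "c > 0") (simp_all add: abs_if split: if_splits)
  qed
  have sd: "s = 1 / 2 * of_int (m1 + 2*m2) / sqrt N"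
  proof -
    have "sqrt 3 * s * m1 = d * (m1 + 2 * m2)" using rel cd by simp
    then have "sqrt 3 * m1 * s = sqrt 3 * m1 * (1 / 2 * of_int (m1 + 2*m2) / sqrt N)"
      unfolding d_def by (simp add: field_simps)
    note eq = this
    have nz: "sqrt 3 * real_of_int m1 \<noteq> 0" using m1nz by simp
    from eq show ?thesis by (rule mult_left_cancel[OF nz, THEN iffD1])
  qed
  show ?thesis using m1nz g cd sd unfolding c_def s_def d_def N_def
    by (intro exI[of _ m1] exI[of _ m2]) simp
qed

theorem mainTheorem6:
  fixes \<psi> :: real
  assumes "0 \<le> \<psi>" and "\<psi> < 2 * pi"
  shows "((\<exists>\<kappa>::real. \<kappa> \<noteq> 0 \<and> eqnF \<psi> \<kappa> = 0) \<longleftrightarrow> in_Q_infty_cond \<psi>)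
    \<and> (in_Q_infty_cond \<psi> \<longrightarrow>
        (\<exists>m1 m2 :: int. (m1, m2) \<noteq> (0, 0) \<and> gcd \<bar>m1\<bar> \<bar>m2\<bar> = 1
           \<and> cos \<psi> = sqrt 3 / 2 * of_int m1 / sqrt (of_int (m1^2 + m1*m2 + m2^2))
           \<and> sin \<psi> = 1 / 2 * of_int (m1 + 2*m2) / sqrt (of_int (m1^2 + m1*m2 + m2^2))
           \<and> {\<kappa>::real. eqnF \<psi> \<kappa> = 0}
               = {4 * of_int M * pi / sqrt 3 * sqrt (of_int (m1^2 + m1*m2 + m2^2)) | M :: int. True}))"
proof -
  have part2: "\<exists>m1 m2 :: int. (m1, m2) \<noteq> (0, 0) \<and> gcd \<bar>m1\<bar> \<bar>m2\<bar> = 1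
           \<and> cos \<psi> = sqrt 3 / 2 * of_int m1 / sqrt (of_int (m1^2 + m1*m2 + m2^2))
           \<and> sin \<psi> = 1 / 2 * of_int (m1 + 2*m2) / sqrt (of_int (m1^2 + m1*m2 + m2^2))
           \<and> {\<kappa>::real. eqnF \<psi> \<kappa> = 0}
               = {4 * of_int M * pi / sqrt 3 * sqrt (of_int (m1^2 + m1*m2 + m2^2)) | M :: int. True}"
    if Q: "in_Q_infty_cond \<psi>"
  proof -
    obtain m1 m2 :: int where m: "(m1, m2) \<noteq> (0, 0)" "gcd m1 m2 = 1"
      "cos \<psi> = sqrt 3 / 2 * of_int m1 / sqrt (of_int (m1^2 + m1*m2 + m2^2))"
      "sin \<psi> = 1 / 2 * of_int (m1 + 2*m2) / sqrt (of_int (m1^2 + m1*m2 + m2^2))"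
      using rep[OF Q] by (elim exE conjE) (rule that; assumption)
    have Np: "real_of_int (m1^2 + m1*m2 + m2^2) > 0" by (rule of_int_pos[OF N_pos[OF m(1)]])
    have "{\<kappa>::real. eqnF \<psi> \<kappa> = 0}
               = {4 * of_int M * pi / sqrt 3 * sqrt (of_int (m1^2 + m1*m2 + m2^2)) | M :: int. True}"
      by (rule set_char[OF m(2) refl Np m(3) m(4)])
    note S = this
    have g: "gcd \<bar>m1\<bar> \<bar>m2\<bar> = 1" using m(2) by simp
    show ?thesis by (intro exI[of _ m1] exI[of _ m2] conjI m(1) g m(3) m(4) S)
  qed
  have dir1: "in_Q_infty_cond \<psi>" if k0: "\<kappa> \<noteq> 0" and ke: "eqnF \<psi> \<kappa> = 0" for \<kappa>
  proof (cases "cos \<psi> = 0")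
    case True then show ?thesis unfolding in_Q_infty_cond_def by simp
  next
    case False
    obtain p q :: int where pq: "\<kappa> * cos \<psi> = 2*pi*p"
       "\<kappa> / 2 * cos \<psi> + sqrt 3 * \<kappa> / 2 * sin \<psi> = 2*pi*q"
      using ke by (auto simp: eqnF_zero_iff)
    have p0: "real_of_int p \<noteq> 0" using pq(1) k0 False by auto
    have "(sqrt 3 * tan \<psi> - 1) / 2 = of_int q / of_int p - 1"
    proof -
      have "of_int q / of_int p = (2*pi*q) / (2*pi*p)" using pi_gt_zero by simp
      also have "\<dots> = (\<kappa> / 2 * cos \<psi> + sqrt 3 * \<kappa> / 2 * sin \<psi>) / (\<kappa> * cos \<psi>)"
        using pq by simp
      also have "\<dots> = (\<kappa> / 2 * cos \<psi>) / (\<kappa> * cos \<psi>) + (sqrt 3 * \<kappa> / 2 * sin \<psi>) / (\<kappa> * cos \<psi>)"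
        by (rule add_divide_distrib)
      also have "\<dots> = 1/2 + sqrt 3 / 2 * (sin \<psi> / cos \<psi>)"
        using k0 False by simp
      also have "\<dots> = (sqrt 3 * tan \<psi> - 1) / 2 + 1"
        unfolding tan_def by (simp add: algebra_simps add_divide_distrib diff_divide_distrib)
      finally show ?thesis by simp
    qed
    then have "(sqrt 3 * tan \<psi> - 1) / 2 \<in> \<rat>"
      by (simp only:) (intro Rats_diff Rats_divide Rats_of_int Rats_1)
    then show ?thesis unfolding in_Q_infty_cond_def by simp
  qed
  have dir2: "\<exists>\<kappa>::real. \<kappa> \<noteq> 0 \<and> eqnF \<psi> \<kappa> = 0" if Q: "in_Q_infty_cond \<psi>"
  proof -
    obtain m1 m2 :: int where m: "(m1, m2) \<noteq> (0, 0)"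
      "{\<kappa>::real. eqnF \<psi> \<kappa> = 0}
               = {4 * of_int M * pi / sqrt 3 * sqrt (of_int (m1^2 + m1*m2 + m2^2)) | M :: int. True}"
      using part2[OF Q] by (elim exE conjE) (rule that; assumption)
    have Np: "real_of_int (m1^2 + m1*m2 + m2^2) > 0" by (rule of_int_pos[OF N_pos[OF m(1)]])
    define k where "k = 4 * of_int (1::int) * pi / sqrt 3 * sqrt (of_int (m1^2 + m1*m2 + m2^2))"
    have "k \<in> {\<kappa>::real. eqnF \<psi> \<kappa> = 0}" unfolding m(2) k_def
      by (rule CollectI, rule exI[of _ "1::int"]) simp
    moreover have "k \<noteq> 0" unfolding k_def using Np pi_gt_zero by simp
    ultimately show ?thesis by auto
  qed
  show ?thesis
  proof (intro conjI iffI impI)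
    assume "\<exists>\<kappa>::real. \<kappa> \<noteq> 0 \<and> eqnF \<psi> \<kappa> = 0"
    then obtain \<kappa> where "\<kappa> \<noteq> 0" "eqnF \<psi> \<kappa> = 0" by blast
    then show "in_Q_infty_cond \<psi>" by (rule dir1)
  next
    assume "in_Q_infty_cond \<psi>"
    then show "\<exists>\<kappa>::real. \<kappa> \<noteq> 0 \<and> eqnF \<psi> \<kappa> = 0" by (rule dir2)
  next
    assume "in_Q_infty_cond \<psi>"
    then show "\<exists>m1 m2 :: int. (m1, m2) \<noteq> (0, 0) \<and> gcd \<bar>m1\<bar> \<bar>m2\<bar> = 1
           \<and> cos \<psi> = sqrt 3 / 2 * of_int m1 / sqrt (of_int (m1^2 + m1*m2 + m2^2))
           \<and> sin \<psi> = 1 / 2 * of_int (m1 + 2*m2) / sqrt (of_int (m1^2 + m1*m2 + m2^2))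
           \<and> {\<kappa>::real. eqnF \<psi> \<kappa> = 0}
               = {4 * of_int M * pi / sqrt 3 * sqrt (of_int (m1^2 + m1*m2 + m2^2)) | M :: int. True}"
      by (rule part2)
  qed
qed

end
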